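(* Let $G$ be a discriminating group and let $\mathcal{S}$ be a $T$-subgroup of $F$ which consists of weak* identities in $G$ modulo the trivial $T$-subgroup $\{1\}$. Then every element of $\mathcal{S}$ is an identity in $G$, i.e. $\pi(s)=1$ for all $s\in\mathcal{S}$ and all homomorphisms $\pi:F\to G$.
   Context: A group $G$ is discriminating if for every integer $N$ and every $h_1,\dots,h_N\in G\times G$ there is a homomorphism $\rho:G\times G\to G$ with $\rho(h_i)=1$ if and only if $h_i=1$, for each $i$. Let $F$ be the free group on countably many generators $g_1,g_2,\dots$. For $N\ge 1$, $F^{\times N}$ is the direct product of $N$ copies of $F$, $i_k:F\to F^{\times N}$ the $k$-th inclusion. A subset $S\subset F$ is a set of weak identities in a group $G$ if there exists $N\ge1$ such that for any $s_1,\dots,s_N\in S$ and any homomorphism $\rho:F^{\times N}\to G$ some $k$ has $\rho(i_k(s_k))=1$. A $T$-subgroup of $F$ is a subgroup preserved by all endomorphisms of $F$. For a $T$-subgroup $\mathcal{H}$, $\mathcal{H}(G)=\{\pi(h):h\in\mathcal{H},\ \pi:F\to G\text{ a homomorphism}\}$. $S$ consists of weak identities modulo $\mathcal{H}$ in $G$ if $S$ is a set of weak identities in $G/\mathcal{H}(G)$. A $T$-subgroup $\mathcal{S}$ consists of weak* identities in $G$ modulo a $T$-subgroup $\mathcal{H}$ if there exist $m\ge0$ and $T$-subgroups $\mathcal{S}_0=\mathcal{S},\dots,\mathcal{S}_m=\mathcal{H}$ such that $\mathcal{S}_{j-1}$ consists of weak identities modulo $\mathcal{S}_j$ in $G$ for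 all $j=1,\dots,m$. *)

theory Defs
  imports "HOL-Algebra.Algebra"
begin

text \<open>Letters are pairs (i, b): generator number i, b = True meaning the inverse.
  Elements of F are reduced words.\<close>

type_synonym fword = "(nat \<times> bool) list"

fun fw_push :: "nat \<times> bool \<Rightarrow> fword \<Rightarrow> fword" where
  "fw_push x [] = [x]"
| "fw_push x (y # ys) = (if fst x = fst y \<and> snd x \<noteq> snd y then ys else x # y # ys)"

definition fw_reduce :: "fword \<Rightarrow> fword" where
  "fw_reduce w = foldr fw_push w []"

fun fw_reduced :: "fword \<Rightarrow> bool" where
  "fw_reduced [] = True"
| "fw_reduced [x] = True"
| "fw_reduced (x # y # ys) = (\<not> (fst x = fst y \<and> snd x \<noteq> snd y) \<and> fw_reduced (y # ys))"

definition free_group_F :: "fword monoid" where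
  "free_group_F = \<lparr>carrier = {w. fw_reduced w}, monoid.mult = (\<lambda>u v. fw_reduce (u @ v)), one = []\<rparr>"

definition fgen :: "nat \<Rightarrow> fword" where
  "fgen k = [(k, False)]"

definition discriminating :: "('a, 'b) monoid_scheme \<Rightarrow> bool" where
  "discriminating G \<longleftrightarrow>
     (\<forall>hs :: ('a \<times> 'a) list. set hs \<subseteq> carrier (G \<times>\<times> G) \<longrightarrow>
        (\<exists>\<rho> \<in> hom (G \<times>\<times> G) G. \<forall>h \<in> set hs. \<rho> h = \<one>\<^bsub>G\<^esub> \<longleftrightarrow> h = \<one>\<^bsub>G \<times>\<times> G\<^esub>))"

definition F_power :: "nat \<Rightarrow> (nat \<Rightarrow> fword) monoid" where
  "F_power N = product_group {..<N} (\<lambda>_. free_group_F)"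

definition F_incl :: "nat \<Rightarrow> nat \<Rightarrow> fword \<Rightarrow> (nat \<Rightarrow> fword)" where
  "F_incl N k x = (\<lambda>i \<in> {..<N}. if i = k then x else \<one>\<^bsub>free_group_F\<^esub>)"

definition weak_identities :: "fword set \<Rightarrow> ('a, 'b) monoid_scheme \<Rightarrow> bool" where
  "weak_identities S G \<longleftrightarrow>
     (\<exists>N \<ge> 1. \<forall>s \<in> {..<N} \<rightarrow> S. \<forall>\<rho> \<in> hom (F_power N) G.
        \<exists>k < N. \<rho> (F_incl N k (s k)) = \<one>\<^bsub>G\<^esub>)"

definition T_subgroup :: "fword set \<Rightarrow> bool" where
  "T_subgroup H \<longleftrightarrow> subgroup H free_group_F \<and>
     (\<forall>\<phi> \<in> hom free_group_F free_group_F. \<phi> ` H \<subseteq> H)"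

definition verbal :: "fword set \<Rightarrow> ('a, 'b) monoid_scheme \<Rightarrow> 'a set" where
  "verbal H G = {\<pi> h | h \<pi>. h \<in> H \<and> \<pi> \<in> hom free_group_F G}"

definition weak_identities_mod :: "fword set \<Rightarrow> fword set \<Rightarrow> ('a, 'b) monoid_scheme \<Rightarrow> bool" where
  "weak_identities_mod S H G \<longleftrightarrow> weak_identities S (G Mod verbal H G)"

definition weak_star_identities_mod :: "fword set \<Rightarrow> fword set \<Rightarrow> ('a, 'b) monoid_scheme \<Rightarrow> bool" where
  "weak_star_identities_mod S H G \<longleftrightarrow>
     (\<exists>m :: nat. \<exists>Ss :: nat \<Rightarrow> fword set.
        (\<forall>j \<le> m. T_subgroup (Ss j)) \<and> Ss 0 = S \<and> Ss m = H \<and>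
        (\<forall>j \<in> {1..m}. weak_identities_mod (Ss (j - 1)) (Ss j) G))"

end

theory Submission
  imports Defs
begin

lemma triv_hom:
  assumes "group G" shows "(\<lambda>x. \<one>\<^bsub>G\<^esub>) \<in> hom A G"
  using assms by (auto simp: hom_def group.is_monoid monoid.one_closed monoid.l_one)

lemma hom_F_one:
  assumes "group G" "\<pi> \<in> hom free_group_F G" shows "\<pi> [] = \<one>\<^bsub>G\<^esub>"
proof -
  have c: "[] \<in> carrier free_group_F" by (simp add: free_group_F_def)
  have m: "[] \<otimes>\<^bsub>free_group_F\<^esub> [] = []" by (simp add: free_group_F_def fw_reduce_def)
  have "\<pi> [] = \<pi> [] \<otimes>\<^bsub>G\<^esub> \<pi> []"
    using hom_mult[OF assms(2) c c] m by simp
  moreover have "\<pi> [] \<in> carrier G" using assms(2) c by (auto simp: hom_def)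
  ultimately show ?thesis using assms(1)
    by (metis group.l_cancel_one' group.r_cancel_one)
qed

lemma build:
  assumes G: "group G" and D: "discriminating G" and pi: "\<pi> \<in> hom free_group_F G"
    and s: "s \<in> carrier free_group_F" and ns: "\<pi> s \<noteq> \<one>\<^bsub>G\<^esub>"
  shows "n \<le> N \<Longrightarrow> \<exists>\<theta>\<in>hom (F_power N) G. \<forall>k<n. \<theta> (F_incl N k s) \<noteq> \<one>\<^bsub>G\<^esub>"
proof (induction n)
  case 0
  then show ?case using triv_hom[OF G] by blast
next
  case (Suc n)
  then obtain \<theta> where th: "\<theta> \<in> hom (F_power N) G" and thk: "\<forall>k<n. \<theta> (F_incl N k s) \<noteq> \<one>\<^bsub>G\<^esub>"
    by auto
  have nN: "n < N" using Suc.prems by simp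
  have e: "[] \<in> carrier free_group_F" by (simp add: free_group_F_def)
  have one: "\<one>\<^bsub>free_group_F\<^esub> = []" by (simp add: free_group_F_def)
  have incl: "F_incl N k s \<in> carrier (F_power N)" for k
    using s e by (auto simp: F_incl_def F_power_def one)
  define hs where "hs = map (\<lambda>k. (\<theta> (F_incl N k s), \<pi> (F_incl N k s n))) [0..<Suc n]"
  have pic: "\<pi> x \<in> carrier G" if "x \<in> carrier free_group_F" for x
    using pi that by (auto simp: hom_def)
  have thc: "\<theta> x \<in> carrier G" if "x \<in> carrier (F_power N)" for x
    using th that by (auto simp: hom_def)
  have "set hs \<subseteq> carrier (G \<times>\<times> G)"
    unfolding hs_def using incl thc pic s e nN by (auto simp: F_incl_def one)
  then obtain \<psi> where psi: "\<psi> \<in> hom (G \<times>\<times> G) G"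
    and psik: "\<forall>h\<in>set hs. \<psi> h = \<one>\<^bsub>G\<^esub> \<longleftrightarrow> h = \<one>\<^bsub>G \<times>\<times> G\<^esub>"
    using D unfolding discriminating_def by blast
  define \<theta>' where "\<theta>' x = \<psi> (\<theta> x, \<pi> (x n))" for x
  have "\<theta>' \<in> hom (F_power N) G"
  proof (rule homI)
    fix x assume x: "x \<in> carrier (F_power N)"
    then have "x n \<in> carrier free_group_F" using nN by (auto simp: F_power_def)
    then show "\<theta>' x \<in> carrier G" unfolding \<theta>'_def
      using psi thc[OF x] pic by (auto simp: hom_def)
  next
    fix x y assume x: "x \<in> carrier (F_power N)" and y: "y \<in> carrier (F_power N)"
    have xn: "x n \<in> carrier free_group_F" using x nN by (auto simp: F_power_def)
    have yn: "y n \<in> carrier free_group_F" using y nN by (auto simp: F_power_def)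
    have "(x \<otimes>\<^bsub>F_power N\<^esub> y) n = x n \<otimes>\<^bsub>free_group_F\<^esub> y n"
      using nN by (simp add: F_power_def)
    then have "\<pi> ((x \<otimes>\<^bsub>F_power N\<^esub> y) n) = \<pi> (x n) \<otimes>\<^bsub>G\<^esub> \<pi> (y n)"
      using hom_mult[OF pi xn yn] by simp
    moreover have "\<theta> (x \<otimes>\<^bsub>F_power N\<^esub> y) = \<theta> x \<otimes>\<^bsub>G\<^esub> \<theta> y"
      using hom_mult[OF th x y] .
    ultimately have "\<theta>' (x \<otimes>\<^bsub>F_power N\<^esub> y) = \<psi> ((\<theta> x, \<pi> (x n)) \<otimes>\<^bsub>G \<times>\<times> G\<^esub> (\<theta> y, \<pi> (y n)))"
      unfolding \<theta>'_def by simp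
    also have "\<dots> = \<theta>' x \<otimes>\<^bsub>G\<^esub> \<theta>' y" unfolding \<theta>'_def
      using hom_mult[OF psi, of "(\<theta> x, \<pi> (x n))" "(\<theta> y, \<pi> (y n))"] thc[OF x] thc[OF y] pic[OF xn] pic[OF yn] by simp
    finally show "\<theta>' (x \<otimes>\<^bsub>F_power N\<^esub> y) = \<theta>' x \<otimes>\<^bsub>G\<^esub> \<theta>' y" .
  qed
  moreover have "\<forall>k<Suc n. \<theta>' (F_incl N k s) \<noteq> \<one>\<^bsub>G\<^esub>"
  proof (intro allI impI)
    fix k assume k: "k < Suc n"
    have mem: "(\<theta> (F_incl N k s), \<pi> (F_incl N k s n)) \<in> set hs"
      unfolding hs_def set_map set_upt by (rule image_eqI[where x=k]) (use k in auto)
    have "(\<theta> (F_incl N k s), \<pi> (F_incl N k s n)) \<noteq> \<one>\<^bsub>G \<times>\<times> G\<^esub>"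
    proof (cases "k < n")
      case True then show ?thesis using thk by simp
    next
      case False then have "k = n" using k by simp
      then show ?thesis using ns nN by (simp add: F_incl_def)
    qed
    then show "\<theta>' (F_incl N k s) \<noteq> \<one>\<^bsub>G\<^esub>"
      using psik mem unfolding \<theta>'_def by blast
  qed
  ultimately show ?case by blast
qed

lemma main:
  assumes G: "group G" and D: "discriminating G"
    and W: "weak_identities S' (G Mod {\<one>\<^bsub>G\<^esub>})"
    and Sc: "S' \<subseteq> carrier free_group_F"
  shows "\<forall>s \<in> S'. \<forall>\<pi> \<in> hom free_group_F G. \<pi> s = \<one>\<^bsub>G\<^esub>"
proof (intro ballI, rule ccontr)
  fix s \<pi> assume s: "s \<in> S'" and pi: "\<pi> \<in> hom free_group_F G" and ns: "\<pi> s \<noteq> \<one>\<^bsub>G\<^esub>"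
  obtain N where N: "N \<ge> 1" and WN: "\<forall>s \<in> {..<N} \<rightarrow> S'. \<forall>\<rho> \<in> hom (F_power N) (G Mod {\<one>\<^bsub>G\<^esub>}).
        \<exists>k < N. \<rho> (F_incl N k (s k)) = \<one>\<^bsub>G Mod {\<one>\<^bsub>G\<^esub>}\<^esub>"
    using W unfolding weak_identities_def by blast
  obtain \<theta> where th: "\<theta> \<in> hom (F_power N) G" and thk: "\<forall>k<N. \<theta> (F_incl N k s) \<noteq> \<one>\<^bsub>G\<^esub>"
    using build[OF G D pi _ ns, of N N] s Sc by blast
  have thc: "\<theta> x \<in> carrier G" if "x \<in> carrier (F_power N)" for x
    using th that by (auto simp: hom_def)
  have rc: "r_coset G {\<one>\<^bsub>G\<^esub>} a = {a}" if "a \<in> carrier G" for a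
    using that G by (simp add: r_coset_def group.is_monoid monoid.l_one)
  have "(\<lambda>x. {\<theta> x}) \<in> hom (F_power N) (G Mod {\<one>\<^bsub>G\<^esub>})"
  proof (rule homI)
    fix x assume x: "x \<in> carrier (F_power N)"
    show "{\<theta> x} \<in> carrier (G Mod {\<one>\<^bsub>G\<^esub>})"
      unfolding carrier_FactGroup using rc[OF thc[OF x]] thc[OF x] by (metis image_eqI)
  next
    fix x y assume x: "x \<in> carrier (F_power N)" and y: "y \<in> carrier (F_power N)"
    show "{\<theta> (x \<otimes>\<^bsub>F_power N\<^esub> y)} = {\<theta> x} \<otimes>\<^bsub>G Mod {\<one>\<^bsub>G\<^esub>}\<^esub> {\<theta> y}"
      using hom_mult[OF th x y] by (simp add: set_mult_def)
  qed
  moreover have "(\<lambda>_. s) \<in> {..<N} \<rightarrow> S'" using s by simp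
  ultimately obtain k where "k < N" "{\<theta> (F_incl N k s)} = \<one>\<^bsub>G Mod {\<one>\<^bsub>G\<^esub>}\<^esub>"
    using WN by fastforce
  then show False using thk by simp
qed

theorem corollary6p5:
  fixes G :: "('a, 'b) monoid_scheme" and S :: "fword set"
  assumes "group G"
    and "discriminating G"
    and "T_subgroup S"
    and "weak_star_identities_mod S {\<one>\<^bsub>free_group_F\<^esub>} G"
  shows "\<forall>s \<in> S. \<forall>\<pi> \<in> hom free_group_F G. \<pi> s = \<one>\<^bsub>G\<^esub>"
proof -
  obtain m :: nat and Ss where T: "\<forall>j \<le> m. T_subgroup (Ss j)" and S0: "Ss 0 = S"
    and Sm: "Ss m = {\<one>\<^bsub>free_group_F\<^esub>}"
    and W: "\<forall>j \<in> {1..m}. weak_identities_mod (Ss (j - 1)) (Ss j) G"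
    using assms(4) unfolding weak_star_identities_mod_def by blast
  have one: "\<one>\<^bsub>free_group_F\<^esub> = []" by (simp add: free_group_F_def)
  have ver: "verbal H G = {\<one>\<^bsub>G\<^esub>}"
    if "[] \<in> H" "\<forall>s \<in> H. \<forall>\<pi> \<in> hom free_group_F G. \<pi> s = \<one>\<^bsub>G\<^esub>" for H :: "fword set"
  proof -
    have "\<one>\<^bsub>G\<^esub> \<in> verbal H G"
      unfolding verbal_def mem_Collect_eq
      by (rule exI[of _ "[]"], rule exI[of _ "\<lambda>x. \<one>\<^bsub>G\<^esub>"])
        (use that(1) triv_hom[OF assms(1), of free_group_F] in simp)
    then show ?thesis using that(2) unfolding verbal_def by blast
  qed
  have Tsub: "[] \<in> Ss j \<and> Ss j \<subseteq> carrier free_group_F" if "j \<le> m" for j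
  proof -
    have "subgroup (Ss j) free_group_F" using T that unfolding T_subgroup_def by blast
    then show ?thesis using subgroup.one_closed[of "Ss j" free_group_F] subgroup.subset[of "Ss j" free_group_F]
      unfolding one by blast
  qed
  have "\<forall>s \<in> Ss (m - i). \<forall>\<pi> \<in> hom free_group_F G. \<pi> s = \<one>\<^bsub>G\<^esub>" if "i \<le> m" for i
    using that
  proof (induction i)
    case 0
    have "Ss (m - 0) = {[]}" using Sm one by simp
    then show ?case using hom_F_one[OF assms(1)] by auto
  next
    case (Suc i)
    have v: "verbal (Ss (m - i)) G = {\<one>\<^bsub>G\<^esub>}"
      by (rule ver) (use Suc Tsub[of "m - i"] in auto)
    have mi: "m - i \<in> {1..m}" using Suc.prems by simp
    have mi2: "m - i - 1 = m - Suc i" by simp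
    have "weak_identities_mod (Ss (m - i - 1)) (Ss (m - i)) G"
      using W mi by blast
    then have "weak_identities_mod (Ss (m - Suc i)) (Ss (m - i)) G"
      unfolding mi2 .
    then have "weak_identities (Ss (m - Suc i)) (G Mod {\<one>\<^bsub>G\<^esub>})"
      unfolding weak_identities_mod_def v .
    from main[OF assms(1,2) this] show ?case using Tsub[of "m - Suc i"] by simp
  qed
  from this[of m] show ?thesis using S0 by simp
qed

end
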